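(* Let $K$ be a field, $S=K[x_1,\ldots,x_n]$, $I\subset S$ a monomial ideal with $I\ne S$ and $G(I)=\{x^{a_1},\ldots,x^{a_m}\}$, let $T$ be a polynomial ring over $K$, and let $L_1,\ldots,L_m$ be arbitrary monomial ideals of $T$. Then the complex $\mathbb{F}^*$ of $L_1,\ldots,L_m$ induced by $I$ (defined in the context) is a well-defined complex of $T$-modules, and $H_0(\mathbb{F}^* )=T/L$ where $L=\sum_{j=1}^mL_j$.
   Context: For $a\in\mathbb{N}^n$, $x^a=x_1^{a(1)}\cdots x_n^{a(n)}$; $G(I)$ is the minimal monomial generating set. Let $0\to F_p\to\cdots\to F_1\to F_0\to S/I\to 0$ be the $\mathbb{Z}^n$-graded minimal free resolution of $S/I$ with differential $\partial$, where $F_0=S$ with basis $f_{01}$ of degree $0$, and $F_i=\bigoplus_{j=1}^{\beta_i}Sf_{ij}$ with $f_{ij}$ homogeneous of multidegree $a_{ij}\in\mathbb{N}^n$; here $\beta_1=m$, $a_{1j}=a_j$ and $\partial(f_{1j})=x^{a_j}f_{01}$. Write $\partial(f_{ij})=\sum_k\lambda^{(i)}_{kj}x^{a_{ij}-a_{i-1,k}}f_{i-1,k}$ with $\lambda^{(i)}_{kj}\in K$, where $\lambda^{(i)}_{kj}=0$ whenever $a_{ij}-a_{i-1,k}\notin\mathbb{N}^n$; the matrices $\lambda^{(i)}=(\lambda^{(i)}_{kj})\in K^{\beta_{i-1}\times\beta_i}$ are the scalar matrices ($\lambda^{(1)}=(1,\ldots,1)$). The complex $\mathbb{F}^*$ is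 defined by $F^*_0=T$, $F^*_i=\bigoplus_{j=1}^{\beta_i}L_{ij}$ for $1\le i\le p$, where $L_{1j}=L_j$ and, for $i\ge2$, $L_{ij}=\bigcap_{k:\lambda^{(i)}_{kj}\neq0}L_{i-1,k}$; the map $\partial^*:F^*_i\to F^*_{i-1}$ sends a column vector $u=(u_1,\ldots,u_{\beta_i})^T$, $u_j\in L_{ij}$, to $\lambda^{(i)}u$. *)

theory Defs
  imports Main "HOL-Library.Poly_Mapping"
begin

text \<open>Polynomials over the field 'k in the variables of type 'v:
  finitely supported maps from exponent vectors to coefficients
  (multiplication of poly_mapping is the polynomial product).\<close>
type_synonym ('v, 'k) mpoly = "('v \<Rightarrow>\<^sub>0 nat) \<Rightarrow>\<^sub>0 'k"

definition mon :: "'k::zero \<Rightarrow> ('v \<Rightarrow>\<^sub>0 nat) \<Rightarrow> ('v, 'k) mpoly" where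
  "mon c a = Poly_Mapping.single a c"

text \<open>Componentwise order on exponent vectors (x^b divides x^a).\<close>
definition exp_le :: "('v \<Rightarrow>\<^sub>0 nat) \<Rightarrow> ('v \<Rightarrow>\<^sub>0 nat) \<Rightarrow> bool" where
  "exp_le b a \<longleftrightarrow> (\<forall>v. Poly_Mapping.lookup b v \<le> Poly_Mapping.lookup a v)"

definition is_ideal :: "'a::comm_ring_1 set \<Rightarrow> bool" where
  "is_ideal J \<longleftrightarrow> 0 \<in> J \<and> (\<forall>x\<in>J. \<forall>y\<in>J. x + y \<in> J) \<and> (\<forall>r. \<forall>x\<in>J. r * x \<in> J)"

definition ideal_gen :: "'a::comm_ring_1 set \<Rightarrow> 'a set" where
  "ideal_gen A = \<Inter>{J. is_ideal J \<and> A \<subseteq> J}"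

definition monomial_ideal :: "('v, 'k::field) mpoly set \<Rightarrow> bool" where
  "monomial_ideal J \<longleftrightarrow> (\<exists>B. J = ideal_gen ((\<lambda>b. mon 1 b) ` B))"

definition min_gens :: "('v, 'k::field) mpoly set \<Rightarrow> ('v, 'k) mpoly set" where
  "min_gens J = {mon 1 a | a. mon 1 a \<in> J \<and> (\<forall>b. mon 1 b \<in> J \<and> exp_le b a \<longrightarrow> b = a)}"

text \<open>Resolution data: beta i = rank of F_i, deg i j = multidegree a_ij of basis element f_ij
  (indices j start at 0), lam i k j = scalar matrix entry lambda^(i)_kj.
  Elements of F_i are vectors nat => S vanishing from index beta i on.\<close>
definition free_mod :: "(nat \<Rightarrow> nat) \<Rightarrow> nat \<Rightarrow> (nat \<Rightarrow> 'r::zero) set" where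
  "free_mod beta i = {u. \<forall>j\<ge>beta i. u j = 0}"

text \<open>The differential of the multigraded resolution:
  d(f_ij) = sum_k lam i k j x^(a_ij - a_(i-1)k) f_(i-1)k.\<close>
definition res_diff :: "(nat \<Rightarrow> nat) \<Rightarrow> (nat \<Rightarrow> nat \<Rightarrow> ('v \<Rightarrow>\<^sub>0 nat)) \<Rightarrow>
    (nat \<Rightarrow> nat \<Rightarrow> nat \<Rightarrow> 'k::field) \<Rightarrow> nat \<Rightarrow> (nat \<Rightarrow> ('v, 'k) mpoly) \<Rightarrow> (nat \<Rightarrow> ('v, 'k) mpoly)" where
  "res_diff beta deg lam i u =
     (\<lambda>k. if k < beta (i - 1)
          then (\<Sum>j<beta i. mon (lam i k j) (deg i j - deg (i - 1) k) * u j) else 0)"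

definition is_min_graded_res ::
  "('v, 'k::field) mpoly set \<Rightarrow> nat \<Rightarrow> (nat \<Rightarrow> ('v \<Rightarrow>\<^sub>0 nat)) \<Rightarrow> nat \<Rightarrow> (nat \<Rightarrow> nat) \<Rightarrow>
   (nat \<Rightarrow> nat \<Rightarrow> ('v \<Rightarrow>\<^sub>0 nat)) \<Rightarrow> (nat \<Rightarrow> nat \<Rightarrow> nat \<Rightarrow> 'k) \<Rightarrow> bool" where
  "is_min_graded_res I m a p beta deg lam \<longleftrightarrow>
     beta 0 = 1 \<and> deg 0 0 = 0 \<and> beta 1 = m \<and>
     (\<forall>j<m. deg 1 j = a j \<and> lam 1 0 j = 1) \<and>
     (\<forall>i>p. beta i = 0) \<and>
     (\<forall>i\<ge>1. \<forall>k<beta (i - 1). \<forall>j<beta i.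
        lam i k j \<noteq> 0 \<longrightarrow> exp_le (deg (i - 1) k) (deg i j) \<and> deg (i - 1) k \<noteq> deg i j) \<and>
     {res_diff beta deg lam 1 u 0 | u. u \<in> free_mod beta 1} = I \<and>
     (\<forall>i\<ge>1. {u \<in> free_mod beta i. res_diff beta deg lam i u = (\<lambda>_. 0)} =
             res_diff beta deg lam (Suc i) ` free_mod beta (Suc i))"

text \<open>The ideals L_ij of the complex F^*; L_0j = T (F^*_0 = T), L_1j = L_j,
  L_ij = intersection of L_(i-1)k over k with lam i k j \<noteq> 0 (empty intersection = T).\<close>
fun Lstar :: "(nat \<Rightarrow> nat) \<Rightarrow> (nat \<Rightarrow> nat \<Rightarrow> nat \<Rightarrow> 'k::field) \<Rightarrow> (nat \<Rightarrow> 'r set) \<Rightarrow>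
    nat \<Rightarrow> nat \<Rightarrow> 'r set" where
  "Lstar beta lam L 0 j = UNIV"
| "Lstar beta lam L (Suc 0) j = L j"
| "Lstar beta lam L (Suc (Suc i)) j =
     \<Inter>{Lstar beta lam L (Suc i) k | k. k < beta (Suc i) \<and> lam (Suc (Suc i)) k j \<noteq> 0}"

definition Fstar :: "(nat \<Rightarrow> nat) \<Rightarrow> (nat \<Rightarrow> nat \<Rightarrow> nat \<Rightarrow> 'k::field) \<Rightarrow> (nat \<Rightarrow> ('w, 'k) mpoly set) \<Rightarrow>
    nat \<Rightarrow> (nat \<Rightarrow> ('w, 'k) mpoly) set" where
  "Fstar beta lam L i = {u. (\<forall>j<beta i. u j \<in> Lstar beta lam L i j) \<and> (\<forall>j\<ge>beta i. u j = 0)}"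

definition dstar :: "(nat \<Rightarrow> nat) \<Rightarrow> (nat \<Rightarrow> nat \<Rightarrow> nat \<Rightarrow> 'k::field) \<Rightarrow>
    nat \<Rightarrow> (nat \<Rightarrow> ('w, 'k) mpoly) \<Rightarrow> (nat \<Rightarrow> ('w, 'k) mpoly)" where
  "dstar beta lam i u =
     (\<lambda>k. if k < beta (i - 1) then (\<Sum>j<beta i. mon (lam i k j) 0 * u j) else 0)"

end

theory Submission
  imports Defs
begin


lemma ideal_gen_ideal: "is_ideal (ideal_gen A)"
  unfolding ideal_gen_def is_ideal_def by auto

lemma ideal_gen_sub: "A \<subseteq> ideal_gen A"
  unfolding ideal_gen_def by auto

lemma ideal_gen_least: "is_ideal J \<Longrightarrow> A \<subseteq> J \<Longrightarrow> ideal_gen A \<subseteq> J"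
  unfolding ideal_gen_def by auto

lemma mono_ideal: "monomial_ideal J \<Longrightarrow> is_ideal J"
  unfolding monomial_ideal_def using ideal_gen_ideal by auto

lemma ideal_Inter: "\<forall>J\<in>F. is_ideal J \<Longrightarrow> is_ideal (\<Inter>F)"
  unfolding is_ideal_def by auto

lemma ideal_sum:
  assumes J: "is_ideal J" and "finite A" and "\<forall>x\<in>A. f x \<in> J" shows "sum f A \<in> J"
  using assms(2,3)
proof (induction A rule: finite_induct)
  case empty then show ?case using J by (simp add: is_ideal_def)
next
  case (insert x F) then show ?case using J by (simp add: is_ideal_def)
qed

lemma mon_mult: "mon a b * mon c d = mon (a * c) (b + d)"
  unfolding mon_def by (simp add: mult_single)

lemma mon_mult0: "mon a 0 * (mon b 0 * x) = mon (a * b) 0 * (x::('v,'k::field) mpoly)"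
proof -
  have "mon a 0 * (mon b 0 * x) = (mon a 0 * mon b 0) * x" by (rule mult.assoc[symmetric])
  also have "\<dots> = mon (a * b) 0 * x" by (simp add: mon_mult)
  finally show ?thesis .
qed

lemma mon_0 [simp]: "mon 0 b = 0"
  unfolding mon_def by simp

lemma mon_sum: "(\<Sum>l\<in>A. mon (f l) d) = mon (\<Sum>l\<in>A. f l) d"
  unfolding mon_def
  by (induction A rule: infinite_finite_induct) (auto simp: single_add)

lemma mon_eq0: "mon c d = 0 \<Longrightarrow> c = 0"
  unfolding mon_def by (metis lookup_single_eq lookup_zero)

lemma exp_diff_add:
  assumes "exp_le c b" "exp_le b a"
  shows "(b - c) + (a - b) = (a - (c::'v \<Rightarrow>\<^sub>0 nat))"
  using assms unfolding exp_le_def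
proof (intro poly_mapping_eqI)
  fix k
  have "Poly_Mapping.lookup c k \<le> Poly_Mapping.lookup b k" "Poly_Mapping.lookup b k \<le> Poly_Mapping.lookup a k"
    using assms unfolding exp_le_def by auto
  then show "Poly_Mapping.lookup (b - c + (a - b)) k = Poly_Mapping.lookup (a - c) k"
    by (simp add: lookup_add lookup_minus)
qed

theorem lemma1p2:
  fixes I :: "('v::finite, 'k::field) mpoly set"
    and m :: nat and a :: "nat \<Rightarrow> ('v \<Rightarrow>\<^sub>0 nat)"
    and p :: nat and beta :: "nat \<Rightarrow> nat" and deg :: "nat \<Rightarrow> nat \<Rightarrow> ('v \<Rightarrow>\<^sub>0 nat)"
    and lam :: "nat \<Rightarrow> nat \<Rightarrow> nat \<Rightarrow> 'k"
    and L :: "nat \<Rightarrow> ('w::finite, 'k) mpoly set"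
  assumes "monomial_ideal I" and "I \<noteq> UNIV"
    and "inj_on a {..<m}" and "min_gens I = (\<lambda>j. mon 1 (a j)) ` {..<m}"
    and "is_min_graded_res I m a p beta deg lam"
    and "\<forall>j<m. monomial_ideal (L j)"
  shows "(\<forall>i. (\<lambda>_. 0) \<in> Fstar beta lam L i
             \<and> (\<forall>u\<in>Fstar beta lam L i. \<forall>v\<in>Fstar beta lam L i. (\<lambda>j. u j + v j) \<in> Fstar beta lam L i)
             \<and> (\<forall>r. \<forall>u\<in>Fstar beta lam L i. (\<lambda>j. r * u j) \<in> Fstar beta lam L i))
       \<and> (\<forall>i\<ge>1. \<forall>u\<in>Fstar beta lam L i. dstar beta lam i u \<in> Fstar beta lam L (i - 1))
       \<and> (\<forall>i\<ge>1. \<forall>(r::('w, 'k) mpoly) u v. dstar beta lam i (\<lambda>j. r * u j + v j)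
                      = (\<lambda>k. r * dstar beta lam i u k + dstar beta lam i v k))
       \<and> (\<forall>i\<ge>2. \<forall>u\<in>Fstar beta lam L i. dstar beta lam (i - 1) (dstar beta lam i u) = (\<lambda>_. 0))
       \<and> {dstar beta lam 1 u 0 | u. u \<in> Fstar beta lam L 1} = ideal_gen (\<Union>j<m. L j)"
proof -
  have R: "beta 0 = 1" "beta 1 = m" "\<forall>j<m. lam 1 0 j = 1"
    and LE: "\<forall>i\<ge>1. \<forall>k<beta (i - 1). \<forall>j<beta i.
        lam i k j \<noteq> 0 \<longrightarrow> exp_le (deg (i - 1) k) (deg i j) \<and> deg (i - 1) k \<noteq> deg i j"
    and EX: "\<forall>i\<ge>1. {u \<in> free_mod beta i. res_diff beta deg lam i u = (\<lambda>_. 0)} =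
             res_diff beta deg lam (Suc i) ` free_mod beta (Suc i)"
    using assms(5) unfolding is_min_graded_res_def by auto
  have Lid: "\<And>j. j<m \<Longrightarrow> is_ideal (L j)" using assms(6) mono_ideal by auto
  have LSall: "\<forall>j<beta i. is_ideal (Lstar beta lam L i j)" for i
  proof (induction i rule: nat_less_induct)
    case (1 n)
    show ?case
    proof (cases n)
      case 0 then show ?thesis by (simp add: is_ideal_def)
    next
      case (Suc n')
      show ?thesis
      proof (cases n')
        case 0 then show ?thesis using Suc Lid R by simp
      next
        case (Suc n'')
        have "\<forall>k<beta (Suc n''). is_ideal (Lstar beta lam L (Suc n'') k)"
          using 1 \<open>n = Suc n'\<close> Suc by auto
        then show ?thesis using \<open>n = Suc n'\<close> Suc
          by (auto intro!: ideal_Inter)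
      qed
    qed
  qed
  have LS: "\<And>i j. j < beta i \<Longrightarrow> is_ideal (Lstar beta lam L i j)" using LSall by blast
  have P1: "\<forall>i. (\<lambda>_. 0) \<in> Fstar beta lam L i
             \<and> (\<forall>u\<in>Fstar beta lam L i. \<forall>v\<in>Fstar beta lam L i. (\<lambda>j. u j + v j) \<in> Fstar beta lam L i)
             \<and> (\<forall>r. \<forall>u\<in>Fstar beta lam L i. (\<lambda>j. r * u j) \<in> Fstar beta lam L i)"
    using LS unfolding Fstar_def is_ideal_def by auto
  have P2: "\<forall>i\<ge>1. \<forall>u\<in>Fstar beta lam L i. dstar beta lam i u \<in> Fstar beta lam L (i - 1)"
  proof (intro allI impI ballI)
    fix i u assume i: "1 \<le> i" and u: "u \<in> Fstar beta lam L i"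
    then obtain n where n: "i = Suc n" by (cases i) auto
    show "dstar beta lam i u \<in> Fstar beta lam L (i - 1)"
    proof (cases n)
      case 0 then show ?thesis using n by (simp add: Fstar_def dstar_def)
    next
      case (Suc n')
      have "(\<Sum>j<beta i. mon (lam i k j) 0 * u j) \<in> Lstar beta lam L (Suc n') k"
        if k: "k < beta (Suc n')" for k
      proof (rule ideal_sum[OF LS[OF k]], simp, intro ballI)
        fix j assume j: "j \<in> {..<beta i}"
        show "mon (lam i k j) 0 * u j \<in> Lstar beta lam L (Suc n') k"
        proof (cases "lam i k j = 0")
          case True then show ?thesis using LS[OF k] by (simp add: is_ideal_def)
        next
          case False
          have "u j \<in> Lstar beta lam L i j" using u j unfolding Fstar_def by auto
          then have "u j \<in> Lstar beta lam L (Suc n') k" using False k n Suc by auto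
          then show ?thesis using LS[OF k] unfolding is_ideal_def by blast
        qed
      qed
      then show ?thesis using n Suc by (auto simp: Fstar_def dstar_def)
    qed
  qed
  have P3: "\<forall>i\<ge>1. \<forall>(r::('w, 'k) mpoly) u v. dstar beta lam i (\<lambda>j. r * u j + v j)
                      = (\<lambda>k. r * dstar beta lam i u k + dstar beta lam i v k)"
    by (auto simp: dstar_def fun_eq_iff algebra_simps sum_distrib_left sum.distrib)
  have SC: "(\<Sum>l<beta (Suc n). lam (Suc n) k l * lam (Suc (Suc n)) l j) = 0"
    if k: "k < beta n" and j: "j < beta (Suc (Suc n))" for n k j
  proof -
    define e :: "nat \<Rightarrow> ('v, 'k) mpoly" where "e = (\<lambda>t. if t = j then mon (1::'k) 0 else 0)"
    have e: "e \<in> free_mod beta (Suc (Suc n))" using j unfolding e_def free_mod_def by auto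
    have "res_diff beta deg lam (Suc (Suc n)) e \<in> {u \<in> free_mod beta (Suc n). res_diff beta deg lam (Suc n) u = (\<lambda>_. 0)}"
      using EX e by auto
    then have Z: "res_diff beta deg lam (Suc n) (res_diff beta deg lam (Suc (Suc n)) e) k = 0" by simp
    define D where "D = deg (Suc (Suc n)) j - deg n k"
    have rd: "res_diff beta deg lam (Suc (Suc n)) e l = mon (lam (Suc (Suc n)) l j) (deg (Suc (Suc n)) j - deg (Suc n) l)"
      if l: "l < beta (Suc n)" for l
    proof -
      have "(\<Sum>t<beta (Suc (Suc n)). mon (lam (Suc (Suc n)) l t) (deg (Suc (Suc n)) t - deg (Suc n) l) * e t)
          = mon (lam (Suc (Suc n)) l j) (deg (Suc (Suc n)) j - deg (Suc n) l) * e j"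
        by (subst sum.remove[of _ j]) (auto simp: e_def j)
      then show ?thesis using l by (simp add: res_diff_def e_def mon_mult)
    qed
    have trm: "mon (lam (Suc n) k l) (deg (Suc n) l - deg n k) * mon (lam (Suc (Suc n)) l j) (deg (Suc (Suc n)) j - deg (Suc n) l)
          = mon (lam (Suc n) k l * lam (Suc (Suc n)) l j) D" if l: "l < beta (Suc n)" for l
    proof (cases "lam (Suc n) k l = 0 \<or> lam (Suc (Suc n)) l j = 0")
      case True then show ?thesis by (auto simp: mon_mult)
    next
      case False
      have "exp_le (deg n k) (deg (Suc n) l)" using LE False k l
        by (metis One_nat_def diff_Suc_1 le_add1 plus_1_eq_Suc)
      moreover have "exp_le (deg (Suc n) l) (deg (Suc (Suc n)) j)" using LE False j l
        by (metis diff_Suc_1 le_add1 plus_1_eq_Suc)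
      ultimately show ?thesis by (simp add: mon_mult D_def exp_diff_add)
    qed
    have "res_diff beta deg lam (Suc n) (res_diff beta deg lam (Suc (Suc n)) e) k
        = (\<Sum>l<beta (Suc n). mon (lam (Suc n) k l * lam (Suc (Suc n)) l j) D)"
    proof -
      have "res_diff beta deg lam (Suc n) (res_diff beta deg lam (Suc (Suc n)) e) k
         = (\<Sum>l<beta (Suc n). mon (lam (Suc n) k l) (deg (Suc n) l - deg n k) * res_diff beta deg lam (Suc (Suc n)) e l)"
        using k by (simp add: res_diff_def[of beta deg lam "Suc n"])
      also have "\<dots> = (\<Sum>l<beta (Suc n). mon (lam (Suc n) k l * lam (Suc (Suc n)) l j) D)"
        by (rule sum.cong) (simp_all add: rd trm)
      finally show ?thesis .
    qed
    also have "\<dots> = mon (\<Sum>l<beta (Suc n). lam (Suc n) k l * lam (Suc (Suc n)) l j) D"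
      by (rule mon_sum)
    finally show ?thesis using Z mon_eq0 by metis
  qed
  have P4: "\<forall>i\<ge>2. \<forall>u\<in>Fstar beta lam L i. dstar beta lam (i - 1) (dstar beta lam i u) = (\<lambda>_. 0)"
  proof (intro allI impI ballI)
    fix i u assume i: "2 \<le> i" and u: "u \<in> Fstar beta lam L i"
    then obtain n where n: "i = Suc (Suc n)" by (metis add_2_eq_Suc le_Suc_ex)
    show "dstar beta lam (i - 1) (dstar beta lam i u) = (\<lambda>_. 0)"
    proof
      fix k
      show "dstar beta lam (i - 1) (dstar beta lam i u) k = 0"
      proof (cases "k < beta n")
        case False then show ?thesis using n by (simp add: dstar_def)
      next
        case True
        have "dstar beta lam (i - 1) (dstar beta lam i u) k
          = (\<Sum>l<beta (Suc n). \<Sum>j<beta i. mon (lam (Suc n) k l) 0 * (mon (lam i l j) 0 * u j))"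
          using True n by (simp add: dstar_def sum_distrib_left)
        also have "\<dots> = (\<Sum>j<beta i. \<Sum>l<beta (Suc n). mon (lam (Suc n) k l * lam i l j) 0 * u j)"
          unfolding mon_mult0 by (rule sum.swap[of "\<lambda>l j. mon (lam (Suc n) k l * lam i l j) 0 * u j"])
        also have "\<dots> = (\<Sum>j<beta i. mon (\<Sum>l<beta (Suc n). lam (Suc n) k l * lam i l j) 0 * u j)"
          by (rule sum.cong[OF refl]) (simp only: sum_distrib_right[symmetric] mon_sum)
        also have "\<dots> = 0"
        proof (rule sum.neutral, rule ballI)
          fix j assume "j \<in> {..<beta i}"
          then have jb: "j < beta (Suc (Suc n))" using n by simp
          have "(\<Sum>l<beta (Suc n). lam (Suc n) k l * lam (Suc (Suc n)) l j) = 0"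
            by (rule SC[OF True jb])
          moreover have "lam i = lam (Suc (Suc n))" using n by (rule arg_cong)
          ultimately have "(\<Sum>l<beta (Suc n). lam (Suc n) k l * lam i l j) = 0"
            by (simp only:)
          then show "mon (\<Sum>l<beta (Suc n). lam (Suc n) k l * lam i l j) 0 * u j = 0"
            by (simp only: mon_0 mult_zero_left)
        qed
        finally show ?thesis .
      qed
    qed
  qed
  have D1: "dstar beta lam 1 u 0 = (\<Sum>j<m. u j)" for u :: "nat \<Rightarrow> ('w, 'k) mpoly"
  proof -
    have "dstar beta lam 1 u 0 = (\<Sum>j<beta 1. mon (lam 1 0 j) 0 * u j)"
      unfolding dstar_def using R(1) by simp
    also have "\<dots> = (\<Sum>j<m. u j)"
      unfolding R(2)
    proof (rule sum.cong[OF refl])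
      fix j assume "j \<in> {..<m}"
      then have "lam 1 0 j = 1" using R(3) by blast
      then show "mon (lam 1 0 j) 0 * u j = u j" unfolding mon_def by (simp only: single_one mult_1_left)
    qed
    finally show ?thesis .
  qed
  have F0: "(\<lambda>_. 0) \<in> Fstar beta lam L 1" using P1 by blast
  have Fadd: "\<And>u v. u \<in> Fstar beta lam L 1 \<Longrightarrow> v \<in> Fstar beta lam L 1 \<Longrightarrow> (\<lambda>j. u j + v j) \<in> Fstar beta lam L 1"
    using P1 by blast
  have Fmul: "\<And>r u. u \<in> Fstar beta lam L 1 \<Longrightarrow> (\<lambda>j. r * u j) \<in> Fstar beta lam L 1"
    using P1 by blast
  let ?S = "{dstar beta lam 1 u 0 | u. u \<in> Fstar beta lam L 1}"
  let ?T = "{(\<Sum>j<m. u j) | u. u \<in> Fstar beta lam L 1}"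
  have S: "?S = ?T" by (simp only: D1)
  have P5: "?T = ideal_gen (\<Union>j<m. L j)"
  proof
    show "?T \<subseteq> ideal_gen (\<Union>j<m. L j)"
    proof
      fix x assume "x \<in> ?T"
      then obtain u where x: "x = (\<Sum>j<m. u j)" and u: "u \<in> Fstar beta lam L 1" by blast
      have "\<forall>j\<in>{..<m}. u j \<in> ideal_gen (\<Union>j<m. L j)"
      proof
        fix j assume j: "j \<in> {..<m}"
        then have "u j \<in> L j" using u R(2) unfolding Fstar_def by auto
        then have "u j \<in> (\<Union>j<m. L j)" using j by blast
        then show "u j \<in> ideal_gen (\<Union>j<m. L j)" by (rule subsetD[OF ideal_gen_sub])
      qed
      then show "x \<in> ideal_gen (\<Union>j<m. L j)"
        unfolding x by (intro ideal_sum[OF ideal_gen_ideal]) simp_all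
    qed
  next
    have "is_ideal ?T"
      unfolding is_ideal_def
    proof (intro conjI ballI allI)
      have "0 = (\<Sum>j<m. (\<lambda>_. 0::('w,'k) mpoly) j)" by simp
      then show "0 \<in> ?T" using F0 by blast
    next
      fix x y assume "x \<in> ?T" "y \<in> ?T"
      then obtain u v where uv: "x = (\<Sum>j<m. u j)" "u \<in> Fstar beta lam L 1" "y = (\<Sum>j<m. v j)" "v \<in> Fstar beta lam L 1" by blast
      have "x + y = (\<Sum>j<m. (\<lambda>j. u j + v j) j)" using uv by (simp add: sum.distrib)
      then show "x + y \<in> ?T" using Fadd[OF uv(2) uv(4)] by blast
    next
      fix r x assume "x \<in> ?T"
      then obtain u where uv: "x = (\<Sum>j<m. u j)" "u \<in> Fstar beta lam L 1" by blast
      have "r * x = (\<Sum>j<m. (\<lambda>j. r * u j) j)" using uv by (simp add: sum_distrib_left)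
      then show "r * x \<in> ?T" using Fmul[OF uv(2)] by blast
    qed
    moreover have "(\<Union>j<m. L j) \<subseteq> ?T"
    proof
      fix x assume "x \<in> (\<Union>j<m. L j)"
      then obtain j where j: "j < m" and x: "x \<in> L j" by blast
      define u where "u = (\<lambda>t. if t = j then x else (0::('w,'k) mpoly))"
      have "u \<in> Fstar beta lam L 1"
        unfolding Fstar_def u_def using R x j Lid by (auto simp: is_ideal_def)
      moreover have "x = (\<Sum>t<m. u t)" unfolding u_def using j by simp
      ultimately show "x \<in> ?T" by blast
    qed
    ultimately show "ideal_gen (\<Union>j<m. L j) \<subseteq> ?T" by (rule ideal_gen_least)
  qed
  have P5': "?S = ideal_gen (\<Union>j<m. L j)" using S P5 by (rule trans)
  show ?thesis using P1 P2 P3 P4 P5' by (intro conjI)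
qed

end
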